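(* If $\mathcal C_1$ and $\mathcal C_2$ are row-bounded classes of matrices, then the classes $\mathcal C_1\cup\mathcal C_2$ and $\mathcal C_1\cap\mathcal C_2$ are row-bounded as well.
   Context: All matrices are binary; rows numbered top to bottom, columns left to right; $(i,j)$ is the entry in row $i$, column $j$; $(a,b]=\{a+1,\dots,b\}$. A pattern $P\in\{0,1\}^{k\times\ell}$ is an interval minor of $M\in\{0,1\}^{m\times n}$ if there are integers $0=r_0<\dots<r_k=m$ and $0=c_0<\dots<c_\ell=n$ such that for each 1-entry $(i,j)$ of $P$ the submatrix of $M$ on rows $(r_{i-1},r_i]$ and columns $(c_{j-1},c_j]$ contains a 1-entry. A class of matrices is a set $\mathcal C$ of binary matrices closed under interval minors (if $M\in\mathcal C$ and $P$ is an interval minor of $M$ then $P\in\mathcal C$). $M\in\mathcal C$ is critical for $\mathcal C$ if changing any single 0-entry of $M$ into a 1-entry yields a matrix not in $\mathcal C$. A horizontal 0-run is a maximal set of consecutive 0-entries within one row; the complexity of a row is the number of such runs. The row-complexity of $\mathcal C$ is the supremum over all matrices critical for $\mathcal C$ of the maximum complexity of one of their rows; $\mathcal C$ is row-bounded if it is finite. *)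

theory Defs
  imports Main
begin

text \<open>A binary matrix is a triple (m, n, A): m rows, n columns, entries A i j for
  1 \<le> i \<le> m, 1 \<le> j \<le> n (True = 1-entry, False = 0-entry).
  Well-formed matrices have m, n \<ge> 1 and all entries outside the range equal to False,
  so that a matrix is uniquely represented.\<close>

type_synonym bmatrix = "nat \<times> nat \<times> (nat \<Rightarrow> nat \<Rightarrow> bool)"

definition nrows :: "bmatrix \<Rightarrow> nat" where "nrows M = fst M"
definition ncols :: "bmatrix \<Rightarrow> nat" where "ncols M = fst (snd M)"
definition entry :: "bmatrix \<Rightarrow> nat \<Rightarrow> nat \<Rightarrow> bool" where "entry M = snd (snd M)"

definition wf_matrix :: "bmatrix \<Rightarrow> bool" where
  "wf_matrix M \<longleftrightarrow> nrows M \<ge> 1 \<and> ncols M \<ge> 1 \<and>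
     (\<forall>i j. entry M i j \<longrightarrow> (1 \<le> i \<and> i \<le> nrows M \<and> 1 \<le> j \<and> j \<le> ncols M))"

definition interval_minor :: "bmatrix \<Rightarrow> bmatrix \<Rightarrow> bool" where
  "interval_minor P M \<longleftrightarrow>
     (\<exists>r c :: nat \<Rightarrow> nat.
        r 0 = 0 \<and> r (nrows P) = nrows M \<and> (\<forall>i < nrows P. r i < r (Suc i)) \<and>
        c 0 = 0 \<and> c (ncols P) = ncols M \<and> (\<forall>j < ncols P. c j < c (Suc j)) \<and>
        (\<forall>i j. 1 \<le> i \<and> i \<le> nrows P \<and> 1 \<le> j \<and> j \<le> ncols P \<and> entry P i j \<longrightarrow>
           (\<exists>i' j'. r (i - 1) < i' \<and> i' \<le> r i \<and> c (j - 1) < j' \<and> j' \<le> c j \<and> entry M i' j')))"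

definition matrix_class :: "bmatrix set \<Rightarrow> bool" where
  "matrix_class C \<longleftrightarrow> (\<forall>M\<in>C. wf_matrix M) \<and>
     (\<forall>M\<in>C. \<forall>P. wf_matrix P \<and> interval_minor P M \<longrightarrow> P \<in> C)"

definition set_one :: "bmatrix \<Rightarrow> nat \<Rightarrow> nat \<Rightarrow> bmatrix" where
  "set_one M i j = (nrows M, ncols M, (entry M)(i := (entry M i)(j := True)))"

definition critical :: "bmatrix set \<Rightarrow> bmatrix \<Rightarrow> bool" where
  "critical C M \<longleftrightarrow> M \<in> C \<and>
     (\<forall>i j. 1 \<le> i \<and> i \<le> nrows M \<and> 1 \<le> j \<and> j \<le> ncols M \<and> \<not> entry M i j
            \<longrightarrow> set_one M i j \<notin> C)"

definition zero_runs :: "bmatrix \<Rightarrow> nat \<Rightarrow> (nat \<times> nat) set" where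
  "zero_runs M i = {(a, b). 1 \<le> a \<and> a \<le> b \<and> b \<le> ncols M \<and>
       (\<forall>j. a \<le> j \<and> j \<le> b \<longrightarrow> \<not> entry M i j) \<and>
       (a = 1 \<or> entry M i (a - 1)) \<and> (b = ncols M \<or> entry M i (b + 1))}"

definition row_complexity :: "bmatrix \<Rightarrow> nat \<Rightarrow> nat" where
  "row_complexity M i = card (zero_runs M i)"

text \<open>Row-bounded: the supremum over critical matrices of the maximum row complexity is finite,
  i.e. there is a uniform bound.\<close>

definition row_bounded :: "bmatrix set \<Rightarrow> bool" where
  "row_bounded C \<longleftrightarrow> (\<exists>B::nat. \<forall>M. critical C M \<longrightarrow>
      (\<forall>i. 1 \<le> i \<and> i \<le> nrows M \<longrightarrow> row_complexity M i \<le> B))"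

end

theory Submission
  imports Defs
begin

lemma set_one_simps[simp]:
  "nrows (set_one M i j) = nrows M" "ncols (set_one M i j) = ncols M"
  "entry (set_one M i j) = (entry M)(i := (entry M i)(j := True))"
  by (simp_all add: set_one_def nrows_def ncols_def entry_def)

lemma wf_set_one:
  assumes "wf_matrix M" "1 \<le> i" "i \<le> nrows M" "1 \<le> j" "j \<le> ncols M"
  shows "wf_matrix (set_one M i j)"
  using assms unfolding wf_matrix_def by auto

lemma sub_in_class:
  assumes "matrix_class C" "N \<in> C" "wf_matrix P" "nrows P = nrows N" "ncols P = ncols N"
    "\<forall>i j. entry P i j \<longrightarrow> entry N i j"
  shows "P \<in> C"
proof -
  have "interval_minor P N"
    unfolding interval_minor_def
    apply (rule exI[of _ id], rule exI[of _ id])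
    using assms(4,5,6) by fastforce
  then show ?thesis using assms unfolding matrix_class_def by blast
qed

definition ones :: "bmatrix \<Rightarrow> (nat \<times> nat) set" where
  "ones N = {(i,j). entry N i j}"

lemma ones_sub: "wf_matrix N \<Longrightarrow> ones N \<subseteq> {1..nrows N} \<times> {1..ncols N}"
  unfolding ones_def wf_matrix_def by auto

lemma ones_card: "wf_matrix N \<Longrightarrow> card (ones N) < nrows N * ncols N + 1"
proof -
  assume w: "wf_matrix N"
  have "card (ones N) \<le> card ({1..nrows N} \<times> {1..ncols N})"
    by (rule card_mono[OF _ ones_sub[OF w]]) simp
  then show ?thesis by (simp add: card_cartesian_product)
qed

lemma critical_ext:
  assumes C: "matrix_class C" and M: "M \<in> C"
  shows "\<exists>N. critical C N \<and> nrows N = nrows M \<and> ncols N = ncols M \<and>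
             (\<forall>i j. entry M i j \<longrightarrow> entry N i j)"
proof -
  define P where "P = (\<lambda>N. N \<in> C \<and> nrows N = nrows M \<and> ncols N = ncols M \<and>
             (\<forall>i j. entry M i j \<longrightarrow> entry N i j))"
  have wfC: "\<And>N. N \<in> C \<Longrightarrow> wf_matrix N" using C unfolding matrix_class_def by blast
  have "P M" using M unfolding P_def by auto
  moreover have "\<forall>y. P y \<longrightarrow> card (ones y) < nrows M * ncols M + 1"
    using ones_card wfC unfolding P_def by metis
  ultimately obtain N where PN: "P N" and mx: "\<forall>y. P y \<longrightarrow> card (ones y) \<le> card (ones N)"
    using Lattices_Big.ex_has_greatest_nat[of P M "\<lambda>N. card (ones N)"] by blast
  have "critical C N"
    unfolding critical_def
  proof (intro conjI allI impI)
    show "N \<in> C" using PN P_def by auto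
    fix i j assume h: "1 \<le> i \<and> i \<le> nrows N \<and> 1 \<le> j \<and> j \<le> ncols N \<and> \<not> entry N i j"
    show "set_one N i j \<notin> C"
    proof
      assume s: "set_one N i j \<in> C"
      then have "P (set_one N i j)" using PN unfolding P_def by auto
      then have le: "card (ones (set_one N i j)) \<le> card (ones N)" using mx by blast
      have wN: "wf_matrix N" using PN wfC P_def by auto
      have e: "ones (set_one N i j) = insert (i,j) (ones N)"
        unfolding ones_def by (auto split: if_splits)
      have "(i,j) \<notin> ones N" using h unfolding ones_def by auto
      moreover have "finite (ones N)"
        using ones_sub[OF wN] finite_subset by blast
      ultimately show False using le e by simp
    qed
  qed
  then show ?thesis using PN unfolding P_def by blast
qed

definition lefts :: "bmatrix \<Rightarrow> nat \<Rightarrow> nat set" where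
  "lefts M i = {a. 1 \<le> a \<and> a \<le> ncols M \<and> \<not> entry M i a \<and> (a = 1 \<or> entry M i (a - 1))}"

lemma zr_inj: "inj_on fst (zero_runs M i)"
proof (rule inj_onI)
  fix x y assume x: "x \<in> zero_runs M i" and y: "y \<in> zero_runs M i" and f: "fst x = fst y"
  obtain a b where xa: "x = (a,b)" by fastforce
  obtain b' where yb: "y = (a,b')" using f xa by (cases y) auto
  have A: "\<And>b b'. (a,b) \<in> zero_runs M i \<Longrightarrow> (a,b') \<in> zero_runs M i \<Longrightarrow> \<not> b < b'"
  proof
    fix b b' assume r1: "(a,b) \<in> zero_runs M i" and r2: "(a,b') \<in> zero_runs M i" and lt: "b < b'"
    have "\<not> entry M i (b+1)" using r1 r2 lt unfolding zero_runs_def by auto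
    moreover have "b \<noteq> ncols M" using r2 lt unfolding zero_runs_def by auto
    ultimately show False using r1 unfolding zero_runs_def by auto
  qed
  have "b = b'" using A[of b b'] A[of b' b] x y xa yb by (metis not_less_iff_gr_or_eq)
  then show "x = y" using xa yb by simp
qed

lemma zr_fst: "fst ` zero_runs M i = lefts M i"
proof
  show "fst ` zero_runs M i \<subseteq> lefts M i"
    unfolding zero_runs_def lefts_def by auto
next
  show "lefts M i \<subseteq> fst ` zero_runs M i"
  proof
    fix a assume a: "a \<in> lefts M i"
    define S where "S = {b. a \<le> b \<and> b \<le> ncols M \<and> (\<forall>j. a \<le> j \<and> j \<le> b \<longrightarrow> \<not> entry M i j)}"
    have fS: "finite S" unfolding S_def by (rule finite_subset[of _ "{..ncols M}"]) auto
    have aS: "a \<in> S" using a unfolding S_def lefts_def by auto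
    define b where "b = Max S"
    have bS: "b \<in> S" using fS aS b_def Max_in by blast
    have bmax: "\<And>x. x \<in> S \<Longrightarrow> x \<le> b" using fS b_def by simp
    have "b = ncols M \<or> entry M i (b+1)"
    proof (rule ccontr)
      assume "\<not> (b = ncols M \<or> entry M i (b+1))"
      then have "b + 1 \<in> S" using bS unfolding S_def by (auto simp: le_Suc_eq)
      then show False using bmax by fastforce
    qed
    then have "(a,b) \<in> zero_runs M i" using a bS unfolding zero_runs_def lefts_def S_def by auto
    then show "a \<in> fst ` zero_runs M i" by force
  qed
qed

lemma rc_lefts: "row_complexity M i = card (lefts M i)"
  unfolding row_complexity_def using card_image[OF zr_inj] zr_fst by metis

lemma finite_lefts: "finite (lefts M i)"
  unfolding lefts_def by (rule finite_subset[of _ "{..ncols M}"]) auto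

theorem proposition4p2:
  assumes "matrix_class C1" and "matrix_class C2"
    and "row_bounded C1" and "row_bounded C2"
  shows "row_bounded (C1 \<union> C2) \<and> row_bounded (C1 \<inter> C2)"
proof -
  obtain B1 where B1: "\<And>M i. critical C1 M \<Longrightarrow> 1 \<le> i \<Longrightarrow> i \<le> nrows M \<Longrightarrow> row_complexity M i \<le> B1"
    using assms(3) unfolding row_bounded_def by blast
  obtain B2 where B2: "\<And>M i. critical C2 M \<Longrightarrow> 1 \<le> i \<Longrightarrow> i \<le> nrows M \<Longrightarrow> row_complexity M i \<le> B2"
    using assms(4) unfolding row_bounded_def by blast
  have U: "row_bounded (C1 \<union> C2)"
    unfolding row_bounded_def
  proof (intro exI[of _ "max B1 B2"] allI impI)
    fix M i assume c: "critical (C1 \<union> C2) M" and i: "1 \<le> i \<and> i \<le> nrows M"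
    show "row_complexity M i \<le> max B1 B2"
    proof (cases "M \<in> C1")
      case True
      then have "critical C1 M" using c unfolding critical_def by blast
      then show ?thesis using B1 i by fastforce
    next
      case False
      then have "critical C2 M" using c unfolding critical_def by blast
      then show ?thesis using B2 i by fastforce
    qed
  qed
  have I: "row_bounded (C1 \<inter> C2)"
    unfolding row_bounded_def
  proof (intro exI[of _ "B1 + B2"] allI impI)
    fix M i assume c: "critical (C1 \<inter> C2) M" and i: "1 \<le> i \<and> i \<le> nrows M"
    have M1: "M \<in> C1" and M2: "M \<in> C2" using c unfolding critical_def by auto
    have wM: "wf_matrix M" using M1 assms(1) unfolding matrix_class_def by blast
    obtain N1 where N1: "critical C1 N1" "nrows N1 = nrows M" "ncols N1 = ncols M"
      "\<forall>i j. entry M i j \<longrightarrow> entry N1 i j" using critical_ext[OF assms(1) M1] by blast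
    obtain N2 where N2: "critical C2 N2" "nrows N2 = nrows M" "ncols N2 = ncols M"
      "\<forall>i j. entry M i j \<longrightarrow> entry N2 i j" using critical_ext[OF assms(2) M2] by blast
    have key: "\<not> entry N1 i j \<or> \<not> entry N2 i j"
      if j: "1 \<le> j" "j \<le> ncols M" "\<not> entry M i j" for j
    proof (rule ccontr)
      assume "\<not> (\<not> entry N1 i j \<or> \<not> entry N2 i j)"
      then have e: "entry N1 i j" "entry N2 i j" by auto
      have w: "wf_matrix (set_one M i j)" using wf_set_one[OF wM] i j by auto
      have "set_one M i j \<in> C1"
      proof (rule sub_in_class[OF assms(1) _ w, where N=N1])
        show "N1 \<in> C1" using N1(1) unfolding critical_def by blast
        show "\<forall>a b. entry (set_one M i j) a b \<longrightarrow> entry N1 a b"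
          using N1(4) e by auto
      qed (use N1 in auto)
      moreover have "set_one M i j \<in> C2"
      proof (rule sub_in_class[OF assms(2) _ w, where N=N2])
        show "N2 \<in> C2" using N2(1) unfolding critical_def by blast
        show "\<forall>a b. entry (set_one M i j) a b \<longrightarrow> entry N2 a b"
          using N2(4) e by auto
      qed (use N2 in auto)
      ultimately show False using c i j unfolding critical_def by blast
    qed
    have sub: "lefts M i \<subseteq> lefts N1 i \<union> lefts N2 i"
    proof
      fix a assume a: "a \<in> lefts M i"
      then have a1: "1 \<le> a" "a \<le> ncols M" "\<not> entry M i a" "a = 1 \<or> entry M i (a - 1)"
        unfolding lefts_def by auto
      have p1: "a = 1 \<or> entry N1 i (a - 1)" "a = 1 \<or> entry N2 i (a - 1)" using a1(4) N1(4) N2(4) by auto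
      from key[OF a1(1-3)] show "a \<in> lefts N1 i \<union> lefts N2 i"
        using a1 p1 N1(3) N2(3) unfolding lefts_def by auto
    qed
    have "row_complexity M i = card (lefts M i)" by (rule rc_lefts)
    also have "\<dots> \<le> card (lefts N1 i \<union> lefts N2 i)"
      by (rule card_mono[OF _ sub]) (simp add: finite_lefts)
    also have "\<dots> \<le> card (lefts N1 i) + card (lefts N2 i)" by (rule card_Un_le)
    also have "\<dots> \<le> B1 + B2"
      using B1[OF N1(1)] B2[OF N2(1)] i N1(2) N2(2) rc_lefts by (metis add_mono)
    finally show "row_complexity M i \<le> B1 + B2" .
  qed
  show ?thesis using U I by blast
qed

end
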